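(* There is a universal constant $\kappa>0$ such that for all sufficiently large $T$ the following holds. For every deterministic online algorithm that, in a market with one seller and two buyers, posts in each round a single price to all three traders, there exist a seller cost $c_1=0$ and buyer values $v_1,v_2\in[0,1]$ such that the cumulative gains-from-trade regret of the algorithm over $T$ rounds is at least $\kappa\cdot\frac{\log\log T}{\log\log\log\log T}$.
   Context: Two-sided market model: sellers have fixed unknown costs $c_i\in[0,1]$, buyers fixed unknown values $v_j\in[0,1]$. In each round the learner posts prices and observes every trader's accept/reject decision; a seller accepts a price $p$ iff $p\ge c_i$, a buyer accepts a price $q$ iff $q\le v_j$ (ties in favour of accepting). A maximum-cardinality matching between accepting sellers and accepting buyers is formed; the gains-from-trade (GFT) of a matching $M$ is $\sum_{(i,j)\in M}(v_j-c_i)$. Benchmark: $\mathrm{GFT}^\star$, the maximum GFT over all matchings between sellers and buyers. Round-$t$ regret is $\mathrm{GFT}^\star$ minus the minimum GFT over all maximum-cardinality matchings of the traders accepting in round $t$ (worst-case matching rule); the cumulative regret is the sum over $t=1,\dots,T$. A single-price mechanism posts one common price to all traders. *)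

theory Defs
  imports Complex_Main
begin

text \<open>Two-sided market: sellers indexed by i < n with costs c i,
 buyers indexed by j < m with values v j.\<close>

definition matchings_between :: "nat set \<Rightarrow> nat set \<Rightarrow> (nat \<times> nat) set set" where
  "matchings_between S B =
     {M. M \<subseteq> S \<times> B \<and> (\<forall>(i,j)\<in>M. \<forall>(i',j')\<in>M. (i = i' \<longleftrightarrow> j = j'))}"

definition max_card_matchings :: "nat set \<Rightarrow> nat set \<Rightarrow> (nat \<times> nat) set set" where
  "max_card_matchings S B =
     {M \<in> matchings_between S B. \<forall>M' \<in> matchings_between S B. card M' \<le> card M}"

definition gft :: "(nat \<Rightarrow> real) \<Rightarrow> (nat \<Rightarrow> real) \<Rightarrow> (nat \<times> nat) set \<Rightarrow> real" where
  "gft c v M = (\<Sum>(i,j)\<in>M. v j - c i)"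

definition opt_gft :: "(nat \<Rightarrow> real) \<Rightarrow> (nat \<Rightarrow> real) \<Rightarrow> nat \<Rightarrow> nat \<Rightarrow> real" where
  "opt_gft c v n m = Max (gft c v ` matchings_between {..<n} {..<m})"

definition round_gft :: "(nat \<Rightarrow> real) \<Rightarrow> (nat \<Rightarrow> real) \<Rightarrow> nat set \<Rightarrow> nat set \<Rightarrow> real" where
  "round_gft c v S B = Min (gft c v ` max_card_matchings S B)"

text \<open>Feedback of one round: accept decisions of every seller and every buyer.\<close>
type_synonym feedback = "(nat \<Rightarrow> bool) \<times> (nat \<Rightarrow> bool)"

text \<open>A deterministic single-price algorithm maps the history of feedback to the
 common price posted in the next round.\<close>
type_synonym sp_alg = "feedback list \<Rightarrow> real"

definition accepting_sellers :: "(nat \<Rightarrow> real) \<Rightarrow> nat \<Rightarrow> real \<Rightarrow> nat set" where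
  "accepting_sellers c n p = {i. i < n \<and> c i \<le> p}"

definition accepting_buyers :: "(nat \<Rightarrow> real) \<Rightarrow> nat \<Rightarrow> real \<Rightarrow> nat set" where
  "accepting_buyers v m p = {j. j < m \<and> p \<le> v j}"

definition feedback_of :: "(nat \<Rightarrow> real) \<Rightarrow> (nat \<Rightarrow> real) \<Rightarrow> nat \<Rightarrow> nat \<Rightarrow> real \<Rightarrow> feedback" where
  "feedback_of c v n m p = ((\<lambda>i. i \<in> accepting_sellers c n p), (\<lambda>j. j \<in> accepting_buyers v m p))"

fun history :: "sp_alg \<Rightarrow> (nat \<Rightarrow> real) \<Rightarrow> (nat \<Rightarrow> real) \<Rightarrow> nat \<Rightarrow> nat \<Rightarrow> nat \<Rightarrow> feedback list" where
  "history A c v n m 0 = []"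
| "history A c v n m (Suc t) =
     history A c v n m t @ [feedback_of c v n m (A (history A c v n m t))]"

text \<open>Price posted in round t (rounds numbered from 0).\<close>
definition price :: "sp_alg \<Rightarrow> (nat \<Rightarrow> real) \<Rightarrow> (nat \<Rightarrow> real) \<Rightarrow> nat \<Rightarrow> nat \<Rightarrow> nat \<Rightarrow> real" where
  "price A c v n m t = A (history A c v n m t)"

definition regret :: "sp_alg \<Rightarrow> (nat \<Rightarrow> real) \<Rightarrow> (nat \<Rightarrow> real) \<Rightarrow> nat \<Rightarrow> nat \<Rightarrow> nat \<Rightarrow> real" where
  "regret A c v n m T =
     (\<Sum>t<T. opt_gft c v n m
        - round_gft c v (accepting_sellers c n (price A c v n m t))
                        (accepting_buyers v m (price A c v n m t)))"

end

theory Submission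
  imports Defs
begin


lemma mb_fin: "finite S \<Longrightarrow> finite B \<Longrightarrow> finite (matchings_between S B)"
  by (rule finite_subset[of _ "Pow (S \<times> B)"]) (auto simp: matchings_between_def)

lemma mb_empty: "{} \<in> matchings_between S B"
  by (simp add: matchings_between_def)

lemma mb_mono: "S \<subseteq> S' \<Longrightarrow> B \<subseteq> B' \<Longrightarrow> matchings_between S B \<subseteq> matchings_between S' B'"
  by (auto simp: matchings_between_def)

lemma mcm_ex: assumes "finite S" "finite B" shows "\<exists>M. M \<in> max_card_matchings S B"
proof -
  let ?X = "matchings_between S B"
  have f: "finite (card ` ?X)" using mb_fin[OF assms] by simp
  have ne: "card ` ?X \<noteq> {}" using mb_empty by blast
  obtain M where M: "M \<in> ?X" "card M = Max (card ` ?X)" using Max_in[OF f ne] by auto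
  have "\<forall>M'\<in>?X. card M' \<le> card M" using M(2) Max_ge[OF f] by auto
  then show ?thesis using M(1) by (auto simp: max_card_matchings_def)
qed

lemma round_le: assumes "finite S" "finite B" "M \<in> max_card_matchings S B"
  shows "round_gft c v S B \<le> gft c v M"
proof -
  have "finite (max_card_matchings S B)"
    by (rule finite_subset[OF _ mb_fin[OF assms(1,2)]]) (auto simp: max_card_matchings_def)
  then show ?thesis unfolding round_gft_def using assms(3) by (intro Min_le) auto
qed

lemma opt_ge: assumes "M \<in> matchings_between {..<n} {..<m}" shows "gft c v M \<le> opt_gft c v n m"
  unfolding opt_gft_def using assms mb_fin[of "{..<n}" "{..<m}"] by (intro Max_ge) auto

lemma round_le_opt: assumes "S \<subseteq> {..<n}" "B \<subseteq> {..<m}"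
  shows "round_gft c v S B \<le> opt_gft c v n m"
proof -
  have fin: "finite S" "finite B" using assms finite_subset by auto
  obtain M where M: "M \<in> max_card_matchings S B" using mcm_ex[OF fin] by blast
  have "M \<in> matchings_between {..<n} {..<m}"
    using M mb_mono[OF assms] by (auto simp: max_card_matchings_def)
  then show ?thesis using round_le[OF fin M, of c v] opt_ge[of M n m c v] by linarith
qed

lemma opt_ge_v1: "v 1 \<le> opt_gft (\<lambda>_. 0) v 1 2"
proof -
  have "{(0,1)} \<in> matchings_between {..<1} {..<2}" by (auto simp: matchings_between_def)
  from opt_ge[OF this, of "\<lambda>_. 0" v] show ?thesis by (simp add: gft_def)
qed

lemma empty_mcm: assumes "S = {} \<or> B = {}" shows "{} \<in> max_card_matchings S B"
proof -
  have "matchings_between S B = {{}}" using assms by (auto simp: matchings_between_def)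
  then show ?thesis by (simp add: max_card_matchings_def)
qed

lemma single_mcm: assumes "S \<subseteq> {0}" "finite B" "(0,j) \<in> S \<times> B"
  shows "{(0,j)} \<in> max_card_matchings S B"
proof -
  have "card M' \<le> 1" if "M' \<in> matchings_between S B" for M'
  proof -
    have fS: "finite S" using assms(1) finite_subset by blast
    have fin: "finite M'" using that fS assms(2)
      by (auto simp: matchings_between_def intro: finite_subset[of _ "S \<times> B"])
    have "\<forall>a\<in>M'. \<forall>b\<in>M'. a = b"
    proof (intro ballI)
      fix a b assume ab: "a \<in> M'" "b \<in> M'"
      obtain i j where a: "a = (i,j)" by (cases a)
      obtain i' j' where b: "b = (i',j')" by (cases b)
      have sub: "M' \<subseteq> S \<times> B" and inj: "\<forall>(i,j)\<in>M'. \<forall>(i',j')\<in>M'. (i = i' \<longleftrightarrow> j = j')"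
        using that unfolding matchings_between_def by auto
      have "i = 0" "i' = 0" using sub ab a b assms(1) by auto
      moreover have "(i = i') = (j = j')" using inj ab a b by fast
      ultimately show "a = b" using a b by simp
    qed
    then show ?thesis using card_le_Suc0_iff_eq[OF fin] by simp
  qed
  moreover have "{(0,j)} \<in> matchings_between S B" using assms(3) by (auto simp: matchings_between_def)
  ultimately show ?thesis by (auto simp: max_card_matchings_def)
qed

lemma acc_s: "accepting_sellers (\<lambda>_. 0) 1 p = (if 0 \<le> p then {0} else {})"
  by (auto simp: accepting_sellers_def)

lemma acc_b_sub: "accepting_buyers v 2 p \<subseteq> {..<2}"
  by (auto simp: accepting_buyers_def)

lemma loss_nonneg: "0 \<le> opt_gft (\<lambda>_. 0) v 1 2 - round_gft (\<lambda>_. 0) v (accepting_sellers (\<lambda>_. 0) 1 p) (accepting_buyers v 2 p)"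
  using round_le_opt[of "accepting_sellers (\<lambda>_. 0) 1 p" 1 "accepting_buyers v 2 p" 2 "\<lambda>_. 0" v]
  by (auto simp: accepting_sellers_def accepting_buyers_def)

lemma loss_low: assumes "0 \<le> v 0" "p \<le> v 0" "v 0 \<le> v 1"
  shows "v 1 - v 0 \<le> opt_gft (\<lambda>_. 0) v 1 2 - round_gft (\<lambda>_. 0) v (accepting_sellers (\<lambda>_. 0) 1 p) (accepting_buyers v 2 p)"
proof -
  have finB: "finite (accepting_buyers v 2 p)" using acc_b_sub finite_subset by blast
  have finS: "finite (accepting_sellers (\<lambda>_. 0) 1 p)" by (simp add: accepting_sellers_def)
  have "round_gft (\<lambda>_. 0) v (accepting_sellers (\<lambda>_. 0) 1 p) (accepting_buyers v 2 p) \<le> v 0"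
  proof (cases "0 \<le> p")
    case True
    have "0 \<in> accepting_buyers v 2 p" using assms by (auto simp: accepting_buyers_def)
    then have "{(0,0)} \<in> max_card_matchings (accepting_sellers (\<lambda>_. 0) 1 p) (accepting_buyers v 2 p)"
      using True by (intro single_mcm finB) (auto simp: accepting_sellers_def)
    from round_le[OF finS finB this, of "\<lambda>_. 0" v] show ?thesis by (simp add: gft_def acc_s True)
  next
    case False
    have "{} \<in> max_card_matchings (accepting_sellers (\<lambda>_. 0) 1 p) (accepting_buyers v 2 p)"
      using False by (intro empty_mcm) (auto simp: accepting_sellers_def)
    from round_le[OF finS finB this, of "\<lambda>_. 0" v] show ?thesis using assms by (simp add: gft_def acc_s False)
  qed
  then show ?thesis using opt_ge_v1[of v] by linarith
qed

lemma loss_high: assumes "v 1 < p" "v 0 \<le> v 1"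
  shows "v 1 \<le> opt_gft (\<lambda>_. 0) v 1 2 - round_gft (\<lambda>_. 0) v (accepting_sellers (\<lambda>_. 0) 1 p) (accepting_buyers v 2 p)"
proof -
  have finB: "finite (accepting_buyers v 2 p)" using acc_b_sub finite_subset by blast
  have finS: "finite (accepting_sellers (\<lambda>_. 0) 1 p)" by (simp add: accepting_sellers_def)
  have "v j < p" if "j < 2" for j
  proof -
    have "j = 0 \<or> j = 1" using that by auto
    then show ?thesis using assms by auto
  qed
  note lt = this
  have e: "accepting_buyers v 2 p = {}"
  proof (rule equals0I)
    fix j assume "j \<in> accepting_buyers v 2 p"
    then have "j < 2" "p \<le> v j" by (auto simp: accepting_buyers_def)
    with lt[OF this(1)] show False by linarith
  qed
  have "{} \<in> max_card_matchings (accepting_sellers (\<lambda>_. 0) 1 p) (accepting_buyers v 2 p)"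
    using e by (intro empty_mcm) auto
  from round_le[OF finS finB this, of "\<lambda>_. 0" v] have "round_gft (\<lambda>_. 0) v (accepting_sellers (\<lambda>_. 0) 1 p) (accepting_buyers v 2 p) \<le> 0"
    by (simp add: gft_def acc_s)
  then show ?thesis using opt_ge_v1[of v] by linarith
qed



datatype st = St (hs: "feedback list") (lo: real) (hi: real) (nl: nat) (nh: nat) (nr: nat)

definition fbk :: "real \<Rightarrow> bool \<Rightarrow> feedback" where
  "fbk p b = ((\<lambda>i. i < (1::nat) \<and> 0 \<le> p), (\<lambda>j. j < (2::nat) \<and> b))"

definition islow :: "(nat \<Rightarrow> real) \<Rightarrow> st \<Rightarrow> real \<Rightarrow> bool" where
  "islow \<phi> s p = (p \<le> lo s \<or> (p < hi s \<and> p - lo s < \<phi> (Suc (nr s))))"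

definition nxt :: "(nat \<Rightarrow> real) \<Rightarrow> st \<Rightarrow> real \<Rightarrow> st" where
  "nxt \<phi> s p = (if islow \<phi> s p
     then St (hs s @ [fbk p True]) (max (lo s) p) (hi s) (Suc (nl s)) (nh s) (nr s)
     else St (hs s @ [fbk p False]) (lo s) (min (hi s) p) (nl s) (Suc (nh s))
             (if p < hi s then Suc (nr s) else nr s))"

primrec adv :: "sp_alg \<Rightarrow> (nat \<Rightarrow> real) \<Rightarrow> nat \<Rightarrow> st" where
  "adv A \<phi> 0 = St [] (1/2) 1 0 0 0"
| "adv A \<phi> (Suc t) = nxt \<phi> (adv A \<phi> t) (A (hs (adv A \<phi> t)))"

lemma nxt_low: "islow \<phi> s p \<Longrightarrow> nxt \<phi> s p = St (hs s @ [fbk p True]) (max (lo s) p) (hi s) (Suc (nl s)) (nh s) (nr s)"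
  by (simp add: nxt_def)

lemma nxt_high: "\<not> islow \<phi> s p \<Longrightarrow> nxt \<phi> s p = St (hs s @ [fbk p False]) (lo s) (min (hi s) p) (nl s) (Suc (nh s))
             (if p < hi s then Suc (nr s) else nr s)"
  by (simp add: nxt_def)

lemma adv_Suc_low: "islow \<phi> (adv A \<phi> t) (A (hs (adv A \<phi> t))) \<Longrightarrow>
  adv A \<phi> (Suc t) = St (hs (adv A \<phi> t) @ [fbk (A (hs (adv A \<phi> t))) True]) (max (lo (adv A \<phi> t)) (A (hs (adv A \<phi> t))))
     (hi (adv A \<phi> t)) (Suc (nl (adv A \<phi> t))) (nh (adv A \<phi> t)) (nr (adv A \<phi> t))"
  by (simp add: nxt_low)

lemma adv_Suc_high: "\<not> islow \<phi> (adv A \<phi> t) (A (hs (adv A \<phi> t))) \<Longrightarrow>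
  adv A \<phi> (Suc t) = St (hs (adv A \<phi> t) @ [fbk (A (hs (adv A \<phi> t))) False]) (lo (adv A \<phi> t))
     (min (hi (adv A \<phi> t)) (A (hs (adv A \<phi> t)))) (nl (adv A \<phi> t)) (Suc (nh (adv A \<phi> t)))
     (if A (hs (adv A \<phi> t)) < hi (adv A \<phi> t) then Suc (nr (adv A \<phi> t)) else nr (adv A \<phi> t))"
  by (simp add: nxt_high)

lemma bounds:
  assumes pos: "\<And>h. 0 < \<phi> h"
  shows "1/2 \<le> lo (adv A \<phi> t) \<and> lo (adv A \<phi> t) < hi (adv A \<phi> t) \<and> hi (adv A \<phi> t) \<le> 1"
proof (induction t)
  case 0 then show ?case by simp
next
  case (Suc t)
  let ?s = "adv A \<phi> t" let ?p = "A (hs ?s)"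
  show ?case
  proof (cases "islow \<phi> ?s ?p")
    case True
    then have "?p < hi ?s \<or> ?p \<le> lo ?s" by (auto simp: islow_def)
    then show ?thesis using Suc adv_Suc_low[OF True] by auto
  next
    case False
    then have "lo ?s < ?p" using pos[of "Suc (nr ?s)"] by (auto simp: islow_def)
    then show ?thesis using Suc adv_Suc_high[OF False] by auto
  qed
qed

lemma counts: "nl (adv A \<phi> t) + nh (adv A \<phi> t) = t \<and> nr (adv A \<phi> t) \<le> nh (adv A \<phi> t)"
proof (induction t)
  case 0 then show ?case by simp
next
  case (Suc t)
  then show ?case
    using adv_Suc_low[of \<phi> A t] adv_Suc_high[of \<phi> A t] by (cases "islow \<phi> (adv A \<phi> t) (A (hs (adv A \<phi> t)))") auto
qed

lemma step_mono: "lo (adv A \<phi> t) \<le> lo (adv A \<phi> (Suc t)) \<and> hi (adv A \<phi> (Suc t)) \<le> hi (adv A \<phi> t)"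
  using adv_Suc_low[of \<phi> A t] adv_Suc_high[of \<phi> A t] by (cases "islow \<phi> (adv A \<phi> t) (A (hs (adv A \<phi> t)))") auto

lemma mono_lohi: assumes "t \<le> t'"
  shows "lo (adv A \<phi> t) \<le> lo (adv A \<phi> t') \<and> hi (adv A \<phi> t') \<le> hi (adv A \<phi> t)"
  using assms
proof (induction t' rule: dec_induct)
  case base then show ?case by simp
next
  case (step n) then show ?case using step_mono[of A \<phi> n] by linarith
qed

lemma answer:
  assumes "t < t'"
  shows "(islow \<phi> (adv A \<phi> t) (A (hs (adv A \<phi> t))) \<longrightarrow> A (hs (adv A \<phi> t)) \<le> lo (adv A \<phi> t'))
       \<and> (\<not> islow \<phi> (adv A \<phi> t) (A (hs (adv A \<phi> t))) \<longrightarrow> hi (adv A \<phi> t') \<le> A (hs (adv A \<phi> t)))"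
proof -
  have m: "lo (adv A \<phi> (Suc t)) \<le> lo (adv A \<phi> t') \<and> hi (adv A \<phi> t') \<le> hi (adv A \<phi> (Suc t))"
    using assms by (intro mono_lohi) simp
  show ?thesis using m adv_Suc_low[of \<phi> A t] adv_Suc_high[of \<phi> A t] by auto
qed

lemma hs_Suc: "hs (adv A \<phi> (Suc t)) = hs (adv A \<phi> t) @ [fbk (A (hs (adv A \<phi> t))) (islow \<phi> (adv A \<phi> t) (A (hs (adv A \<phi> t))))]"
  using adv_Suc_low[of \<phi> A t] adv_Suc_high[of \<phi> A t] by (cases "islow \<phi> (adv A \<phi> t) (A (hs (adv A \<phi> t)))") auto

lemma invariant:
  assumes pos: "\<And>h. 0 < \<phi> h" and anti: "\<And>h. \<phi> (Suc h) \<le> \<phi> h" and top: "\<phi> 0 \<le> 1/2"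
  shows "\<phi> (nr (adv A \<phi> t)) - real (nl (adv A \<phi> t)) * \<phi> (Suc (nr (adv A \<phi> t)))
         \<le> hi (adv A \<phi> t) - lo (adv A \<phi> t)"
proof (induction t)
  case 0 then show ?case using top by simp
next
  case (Suc t)
  let ?s = "adv A \<phi> t" let ?p = "A (hs ?s)"
  show ?case
  proof (cases "islow \<phi> ?s ?p")
    case True
    then have "hi ?s - max (lo ?s) ?p \<ge> hi ?s - lo ?s - \<phi> (Suc (nr ?s))"
      using pos[of "Suc (nr ?s)"] by (auto simp: islow_def)
    moreover have "real (Suc (nl ?s)) * \<phi> (Suc (nr ?s)) = real (nl ?s) * \<phi> (Suc (nr ?s)) + \<phi> (Suc (nr ?s))"
      by (simp add: algebra_simps)
    ultimately show ?thesis using Suc adv_Suc_low[OF True] by simp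
  next
    case False
    show ?thesis
    proof (cases "?p < hi ?s")
      case True
      have "\<phi> (Suc (nr ?s)) \<le> ?p - lo ?s" using False True by (auto simp: islow_def)
      moreover have "0 \<le> real (nl ?s) * \<phi> (Suc (Suc (nr ?s)))" using pos[of "Suc (Suc (nr ?s))"] by simp
      ultimately show ?thesis using False True adv_Suc_high[OF False] by simp
    next
      case F2: False
      then show ?thesis using Suc adv_Suc_high[OF False] by simp
    qed
  qed
qed



lemma fb_eq: assumes "v 0 \<le> v 1" and "(b \<and> p \<le> v 0) \<or> (\<not> b \<and> v 1 < p)"
  shows "feedback_of (\<lambda>_. 0) v 1 2 p = fbk p b"
proof -
  have "(j < 2 \<and> p \<le> v j) = (j < 2 \<and> b)" for j :: nat
  proof (cases "j < 2")
    case True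
    then have "j = 0 \<or> j = 1" by auto
    then show ?thesis using assms True by auto
  next
    case False then show ?thesis by simp
  qed
  then show ?thesis
    unfolding feedback_of_def fbk_def accepting_sellers_def accepting_buyers_def by auto
qed

definition vof :: "sp_alg \<Rightarrow> (nat \<Rightarrow> real) \<Rightarrow> nat \<Rightarrow> nat \<Rightarrow> real" where
  "vof A \<phi> ts = (\<lambda>j. if j = 0 then lo (adv A \<phi> ts) else (lo (adv A \<phi> ts) + hi (adv A \<phi> ts)) / 2)"

lemma vof_props:
  assumes pos: "\<And>h. 0 < \<phi> h"
  shows "vof A \<phi> ts 0 = lo (adv A \<phi> ts)" "vof A \<phi> ts 1 = (lo (adv A \<phi> ts) + hi (adv A \<phi> ts)) / 2"
    "1/2 \<le> vof A \<phi> ts 0" "vof A \<phi> ts 0 \<le> vof A \<phi> ts 1" "vof A \<phi> ts 1 < hi (adv A \<phi> ts)"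
    "vof A \<phi> ts 1 \<le> 1" "1/2 \<le> vof A \<phi> ts 1"
  using bounds[of \<phi> A ts, OF pos] by (auto simp: vof_def)

lemma hist_eq:
  assumes pos: "\<And>h. 0 < \<phi> h" and "t \<le> ts"
  shows "history A (\<lambda>_. 0) (vof A \<phi> ts) 1 2 t = hs (adv A \<phi> t)"
  using assms(2)
proof (induction t)
  case 0 then show ?case by simp
next
  case (Suc t)
  let ?s = "adv A \<phi> t" let ?p = "A (hs ?s)" let ?v = "vof A \<phi> ts"
  have lt: "t < ts" using Suc by simp
  have IH: "history A (\<lambda>_. 0) ?v 1 2 t = hs ?s" using Suc by simp
  note ans = answer[OF lt, of \<phi> A]
  have "feedback_of (\<lambda>_. 0) ?v 1 2 ?p = fbk ?p (islow \<phi> ?s ?p)"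
  proof (rule fb_eq)
    show "?v 0 \<le> ?v 1" using vof_props[of \<phi> A ts, OF pos] by blast
    show "(islow \<phi> ?s ?p \<and> ?p \<le> ?v 0) \<or> (\<not> islow \<phi> ?s ?p \<and> ?v 1 < ?p)"
      using ans vof_props(1,5)[of \<phi> A ts, OF pos] by force
  qed
  then show ?case using IH hs_Suc[of A \<phi> t] by simp
qed

lemma sum_lb:
  assumes pos: "\<And>h. 0 < \<phi> h" and "t \<le> ts"
  shows "real (nl (adv A \<phi> t)) * (vof A \<phi> ts 1 - vof A \<phi> ts 0) + real (nh (adv A \<phi> t)) * vof A \<phi> ts 1
    \<le> (\<Sum>i<t. opt_gft (\<lambda>_. 0) (vof A \<phi> ts) 1 2
        - round_gft (\<lambda>_. 0) (vof A \<phi> ts) (accepting_sellers (\<lambda>_. 0) 1 (price A (\<lambda>_. 0) (vof A \<phi> ts) 1 2 i))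
                        (accepting_buyers (vof A \<phi> ts) 2 (price A (\<lambda>_. 0) (vof A \<phi> ts) 1 2 i)))"
  using assms(2)
proof (induction t)
  case 0 then show ?case by simp
next
  case (Suc t)
  let ?s = "adv A \<phi> t" let ?p = "A (hs ?s)" let ?v = "vof A \<phi> ts"
  let ?loss = "\<lambda>p. opt_gft (\<lambda>_. 0) ?v 1 2 - round_gft (\<lambda>_. 0) ?v (accepting_sellers (\<lambda>_. 0) 1 p) (accepting_buyers ?v 2 p)"
  have lt: "t < ts" using Suc by simp
  have IH: "real (nl ?s) * (?v 1 - ?v 0) + real (nh ?s) * ?v 1
    \<le> (\<Sum>i<t. ?loss (price A (\<lambda>_. 0) ?v 1 2 i))" using Suc by simp
  have pr: "price A (\<lambda>_. 0) ?v 1 2 t = ?p"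
    unfolding price_def using hist_eq[of \<phi> t ts A, OF pos] lt by simp
  note ans = answer[OF lt, of \<phi> A]
  note vp = vof_props[of \<phi> A ts, OF pos]
  show ?case
  proof (cases "islow \<phi> ?s ?p")
    case True
    have "?v 1 - ?v 0 \<le> ?loss ?p"
      by (rule loss_low) (use ans True vp in auto)
    then show ?thesis using IH pr adv_Suc_low[OF True] by (simp add: algebra_simps)
  next
    case False
    have "?v 1 \<le> ?loss ?p"
      by (rule loss_high) (use ans False vp in auto)
    then show ?thesis using IH pr adv_Suc_high[OF False] by (simp add: algebra_simps)
  qed
qed

lemma regret_lb:
  assumes pos: "\<And>h. 0 < \<phi> h" and "ts \<le> T"
  shows "real (nl (adv A \<phi> ts)) * ((hi (adv A \<phi> ts) - lo (adv A \<phi> ts)) / 2) + real (nh (adv A \<phi> ts)) / 2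
    \<le> regret A (\<lambda>_. 0) (vof A \<phi> ts) 1 2 T"
proof -
  let ?v = "vof A \<phi> ts"
  let ?f = "\<lambda>i. opt_gft (\<lambda>_. 0) ?v 1 2 - round_gft (\<lambda>_. 0) ?v (accepting_sellers (\<lambda>_. 0) 1 (price A (\<lambda>_. 0) ?v 1 2 i))
                        (accepting_buyers ?v 2 (price A (\<lambda>_. 0) ?v 1 2 i))"
  note vp = vof_props[of \<phi> A ts, OF pos]
  have "real (nh (adv A \<phi> ts)) / 2 \<le> real (nh (adv A \<phi> ts)) * ?v 1"
  proof -
    have "real (nh (adv A \<phi> ts)) * (1/2) \<le> real (nh (adv A \<phi> ts)) * ?v 1"
      by (rule mult_left_mono) (use vp(7) in auto)
    then show ?thesis by simp
  qed
  moreover have "?v 1 - ?v 0 = (hi (adv A \<phi> ts) - lo (adv A \<phi> ts)) / 2" using vp(1,2) by simp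
  then have "real (nl (adv A \<phi> ts)) * (?v 1 - ?v 0) = real (nl (adv A \<phi> ts)) * ((hi (adv A \<phi> ts) - lo (adv A \<phi> ts)) / 2)" by simp
  moreover have "sum ?f {..<ts} \<le> sum ?f {..<T}"
    by (rule sum_mono2) (use assms(2) loss_nonneg in auto)
  ultimately show ?thesis using sum_lb[of \<phi> ts ts A, OF pos order_refl] unfolding regret_def by linarith
qed



primrec phi :: "nat \<Rightarrow> nat \<Rightarrow> real" where
  "phi K 0 = 1/2"
| "phi K (Suc h) = (phi K h)^2 / (16 * real K)"

lemma phi_pos: "1 \<le> K \<Longrightarrow> 0 < phi K h"
  by (induction h) auto

lemma phi_le: assumes "1 \<le> K" shows "phi K h \<le> 1/2"
proof (induction h)
  case 0 then show ?case by simp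
next
  case (Suc h)
  have p: "0 < phi K h" using phi_pos[OF assms] .
  have "(phi K h)^2 \<le> phi K h" using p Suc by (simp add: power2_eq_square mult_le_cancel_right1)
  also have "\<dots> \<le> 1/2" using Suc .
  finally have sq: "(phi K h)^2 \<le> 1/2" .
  moreover have "1 \<le> 16 * real K" using assms by simp
  ultimately have "(phi K h)^2 / (16 * real K) \<le> 1/2"
  proof -
    have "(phi K h)^2 / (16 * real K) \<le> (phi K h)^2 / 1"
      by (rule divide_left_mono) (use assms in auto)
    then show ?thesis using sq by simp
  qed
  then show ?case by simp
qed

lemma phi_anti: assumes "1 \<le> K" shows "phi K (Suc h) \<le> phi K h"
proof -
  have p: "0 < phi K h" using phi_pos[OF assms] .
  have l: "phi K h \<le> 1/2" using phi_le[OF assms] .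
  have sq: "(phi K h)^2 \<le> phi K h" using p l by (simp add: power2_eq_square mult_le_cancel_right1)
  moreover have "1 \<le> 16 * real K" using assms by simp
  ultimately have "(phi K h)^2 / (16 * real K) \<le> phi K h"
  proof -
    have "(phi K h)^2 / (16 * real K) \<le> (phi K h)^2 / 1"
      by (rule divide_left_mono) (use assms in auto)
    then show ?thesis using sq by simp
  qed
  then show ?thesis by simp
qed

lemma phi_antimono: assumes "1 \<le> K" "h \<le> h'" shows "phi K h' \<le> phi K h"
  using assms(2)
proof (induction h' rule: dec_induct)
  case base then show ?case by simp
next
  case (step n) then show ?case using phi_anti[OF assms(1), of n] by linarith
qed

lemma phi_closed: assumes "1 \<le> K" shows "phi K h * (32 * real K)^(2^h) = 16 * real K"
proof (induction h)
  case 0 then show ?case by simp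
next
  case (Suc h)
  have "phi K (Suc h) * (32 * real K)^(2^Suc h) = (phi K h * (32 * real K)^(2^h))^2 / (16 * real K)"
  proof -
    have "(2::nat)^Suc h = 2^h * 2" by simp
    then have Y: "(32 * real K)^(2^Suc h) = ((32 * real K)^(2^h))^2" by (simp only: power_mult)
    show ?thesis unfolding Y by (simp add: power_mult_distrib)
  qed
  also have "\<dots> = 16 * real K" using Suc assms by (simp add: power2_eq_square)
  finally show ?case .
qed

lemma claim:
  assumes K: "1 \<le> K"
  shows "(\<exists>t'\<le>t. 2 * real K \<le> real (nl (adv A (phi K) t')) * (hi (adv A (phi K) t') - lo (adv A (phi K) t')))
     \<or> real (nl (adv A (phi K) t)) * phi K (nr (adv A (phi K) t)) < 4 * real K"
proof (induction t)
  case 0 then show ?case using K by simp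
next
  case (Suc t)
  let ?s = "adv A (phi K) t" let ?p = "A (hs ?s)" let ?s' = "adv A (phi K) (Suc t)"
  have pos: "\<And>h. 0 < phi K h" using phi_pos[OF K] by blast
  have anti: "\<And>h. phi K (Suc h) \<le> phi K h" using phi_anti[OF K] by blast
  have top: "phi K 0 \<le> 1/2" by simp
  show ?case
  proof (cases "\<exists>t'\<le>t. 2 * real K \<le> real (nl (adv A (phi K) t')) * (hi (adv A (phi K) t') - lo (adv A (phi K) t'))")
    case True
    then show ?thesis using le_SucI by blast
  next
    case NE: False
    then have IH: "real (nl ?s) * phi K (nr ?s) < 4 * real K" using Suc by blast
    show ?thesis
    proof (cases "islow (phi K) ?s ?p")
      case True
      note e = adv_Suc_low[OF True]
      show ?thesis
      proof (cases "real (nl ?s') * phi K (nr ?s') < 4 * real K")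
        case True then show ?thesis by blast
      next
        case False
        define n where "n = nl ?s"
        define f where "f = phi K (nr ?s)"
        define g where "g = hi ?s' - lo ?s'"
        define X where "X = (real n + 1) * f"
        have nl': "nl ?s' = Suc n" and nr': "nr ?s' = nr ?s" using e by (simp_all add: n_def)
        have f1: "phi K (Suc (nr ?s)) = f * f / (16 * real K)" by (simp add: f_def power2_eq_square)
        have fpos: "0 < f" and fle: "f \<le> 1/2" using pos phi_le[OF K] by (auto simp: f_def)
        have "real (nl ?s') * phi K (nr ?s') = X" unfolding nl' nr' X_def f_def by simp
        then have X1: "4 * real K \<le> X" using False by linarith
        have X2: "X < 4 * real K + 1/2" using IH fle by (simp add: X_def f_def n_def algebra_simps)
        have inv: "f - real (Suc n) * (f * f / (16 * real K)) \<le> g"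
          using invariant[of "phi K" A "Suc t", OF pos anti top]
          unfolding nl' nr' f1 g_def[symmetric] f_def[symmetric] .
        have Kp: "0 < real K" using K by simp
        have "X / (16 * real K) \<le> 1/2" using X2 Kp by (simp add: divide_simps)
        then have "X * (1/2) \<le> X * (1 - X / (16 * real K))" using X1 Kp by (intro mult_left_mono) auto
        also have "X * (1 - X / (16 * real K)) = (real n + 1) * (f - real (Suc n) * (f * f / (16 * real K)))"
          by (simp add: X_def algebra_simps)
        also have "\<dots> \<le> (real n + 1) * g" using inv by (intro mult_left_mono) auto
        finally have "X * (1/2) \<le> (real n + 1) * g" .
        moreover have "real (nl ?s') * g = (real n + 1) * g" unfolding nl' by simp
        ultimately have "2 * real K \<le> real (nl ?s') * g" using X1 by linarith
        then show ?thesis unfolding g_def by blast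
      qed
    next
      case False
      note e = adv_Suc_high[OF False]
      have nl': "nl ?s' = nl ?s" using e by simp
      have "nr ?s \<le> nr ?s'" using e by simp
      then have "phi K (nr ?s') \<le> phi K (nr ?s)" by (rule phi_antimono[OF K])
      then have "real (nl ?s') * phi K (nr ?s') \<le> real (nl ?s) * phi K (nr ?s)"
        unfolding nl' by (rule mult_left_mono) auto
      then show ?thesis using IH by linarith
    qed
  qed
qed

lemma nat_bound: assumes "3 \<le> K" shows "(32 * K)^(2^K) \<le> (2::nat)^(4^K)"
proof -
  have k5: "K + 5 \<le> 2^K" using assms
  proof (induction K rule: dec_induct)
    case base then show ?case by simp
  next
    case (step n) then show ?case by simp
  qed
  have "32 * K \<le> 2^(K+5)" using less_exp[of K] by (simp add: power_add)
  then have "(32 * K)^(2^K) \<le> (2^(K+5))^(2^K)" by (rule power_mono) simp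
  also have "\<dots> = 2^((K+5) * 2^K)" by (simp add: power_mult)
  also have "\<dots> \<le> 2^(2^K * 2^K)" using k5 by (intro power_increasing) auto
  also have "2^K * 2^K = (4::nat)^K"
  proof -
    have "(4::nat)^K = (2*2)^K" by simp
    also have "\<dots> = 2^K * 2^K" by (rule power_mult_distrib)
    finally show ?thesis by simp
  qed
  finally show ?thesis .
qed



lemma exists_ts:
  fixes T :: nat and K :: nat
  assumes K3: "3 \<le> K" and big: "real ((32 * K)^(2^K)) \<le> real T / 2" and KT: "real K \<le> real T / 2"
  shows "\<exists>ts\<le>T. real K / 2 \<le> regret A (\<lambda>_. 0) (vof A (phi K) ts) 1 2 T"
proof -
  have K1: "1 \<le> K" using K3 by simp
  have pos: "\<And>h. 0 < phi K h" using phi_pos[OF K1] by blast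
  let ?s = "\<lambda>t. adv A (phi K) t"
  show ?thesis
  proof (cases "K \<le> nh (?s T)")
    case True
    have g: "0 \<le> real (nl (?s T)) * ((hi (?s T) - lo (?s T)) / 2)"
      using bounds[of "phi K" A T, OF pos] by simp
    have "real K / 2 \<le> real (nh (?s T)) / 2" using True by simp
    then show ?thesis using regret_lb[of "phi K" T T A, OF pos order_refl] g
      by (intro exI[of _ T]) auto
  next
    case False
    have c: "nl (?s T) + nh (?s T) = T" "nr (?s T) \<le> nh (?s T)" using counts[of A "phi K" T] by auto
    have nlT: "real T - real K \<le> real (nl (?s T))" using c(1) False by linarith
    have "phi K K \<le> phi K (nr (?s T))" using c(2) False by (intro phi_antimono[OF K1]) auto
    define P where "P = (32 * real K)^(2^K)"
    have Ppos: "0 < P" using K1 unfolding P_def by simp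
    have PK: "phi K K * P = 16 * real K" unfolding P_def by (rule phi_closed[OF K1])
    have P2: "P \<le> real T / 2" using big unfolding P_def by simp
    have TK: "0 \<le> real T - real K" using KT by linarith
    have "4 * real K * P \<le> (real T - real K) * (16 * real K)"
    proof -
      have "0 \<le> real T" by simp
      then have "P \<le> 4 * (real T - real K)" using P2 KT by argo
      then have "4 * real K * P \<le> 4 * real K * (4 * (real T - real K))" by (intro mult_left_mono) auto
      then show ?thesis by (simp add: algebra_simps)
    qed
    also have "\<dots> = ((real T - real K) * phi K K) * P" unfolding mult.assoc PK ..
    finally have "4 * real K \<le> (real T - real K) * phi K K" using Ppos by simp
    also have "\<dots> \<le> real (nl (?s T)) * phi K (nr (?s T))"
      using nlT \<open>phi K K \<le> phi K (nr (?s T))\<close> TK pos[of K] by (intro mult_mono) auto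
    finally have "\<not> real (nl (?s T)) * phi K (nr (?s T)) < 4 * real K" by simp
    then obtain t' where t': "t' \<le> T" "2 * real K \<le> real (nl (?s t')) * (hi (?s t') - lo (?s t'))"
      using claim[OF K1, of T A] by blast
    have "real K \<le> real (nl (?s t')) * ((hi (?s t') - lo (?s t')) / 2)" using t'(2) by simp
    then have "real K / 2 \<le> regret A (\<lambda>_. 0) (vof A (phi K) t') 1 2 T"
      using regret_lb[of "phi K" t' T A, OF pos t'(1)] K1 by simp
    then show ?thesis using t'(1) by blast
  qed
qed

lemma asym:
  fixes T :: nat
  assumes T: "exp (exp (exp (exp (100::real)))) \<le> real T"
  shows "\<exists>K::nat. 3 \<le> K \<and> real ((32 * K)^(2^K)) \<le> real T / 2 \<and> real K \<le> real T / 2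
     \<and> ln (ln (real T)) / ln (ln (ln (ln (real T)))) / 8 \<le> real K / 2"
proof -
  define y where "y = ln (real T)"
  define x where "x = ln y"
  have Tpos: "0 < real T" using less_le_trans[OF exp_gt_zero T] .
  have y1: "exp (exp (exp 100)) \<le> y" unfolding y_def using T Tpos by (simp add: ln_ge_iff)
  have ypos: "0 < y" using less_le_trans[OF exp_gt_zero y1] .
  have x1: "exp (exp 100) \<le> x" unfolding x_def using y1 ypos by (simp add: ln_ge_iff)
  have xpos: "0 < x" using less_le_trans[OF exp_gt_zero x1] .
  have z1: "exp 100 \<le> ln x" using x1 xpos by (simp add: ln_ge_iff)
  have zpos: "0 < ln x" using less_le_trans[OF exp_gt_zero z1] .
  have w1: "100 \<le> ln (ln x)" using z1 zpos by (simp add: ln_ge_iff)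
  have e100: "101 \<le> exp (100::real)" using exp_ge_add_one_self[of 100] by simp
  have ee: "102 \<le> exp (exp (100::real))" using exp_ge_add_one_self[of "exp 100"] e100 by linarith
  have eee: "103 \<le> exp (exp (exp (100::real)))" using exp_ge_add_one_self[of "exp (exp 100)"] ee by linarith
  have y25: "25 \<le> y" using y1 eee by linarith
  have x8: "8 < x" using x1 ee by linarith
  define K where "K = nat \<lceil>x / 4\<rceil>"
  have Klo: "x / 4 \<le> real K" unfolding K_def by (rule real_nat_ceiling_ge)
  have Khi: "real K \<le> x / 4 + 1"
  proof -
    have c0: "0 \<le> \<lceil>x / 4\<rceil>" using xpos by simp
    have "real K = real_of_int \<lceil>x / 4\<rceil>" unfolding K_def using c0 by simp
    then show ?thesis using of_int_ceiling_le_add_one[of "x / 4"] by linarith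
  qed
  have K3: "3 \<le> K" using Klo x8 by linarith
  have sy: "exp (x / 2) = sqrt y"
  proof -
    have "(exp (x / 2))^2 = y" unfolding x_def using ypos
      by (simp add: power2_eq_square exp_add[symmetric])
    then show ?thesis by (intro real_sqrt_unique[symmetric]) auto
  qed
  have ln4: "ln (4::real) \<le> 2"
  proof -
    have "ln (4::real) = ln (2 * 2)" by simp
    also have "\<dots> = ln 2 + ln 2" by (rule ln_mult_pos) auto
    finally show ?thesis using ln_2_less_1 by linarith
  qed
  have pow4: "real (4^K) \<le> 4 * sqrt y"
  proof -
    have "real (4^K) = (4::real) powr real K" by (simp add: powr_realpow)
    also have "\<dots> \<le> 4 powr (x / 4 + 1)" by (rule powr_mono) (use Khi in auto)
    also have "\<dots> = 4 powr (x / 4) * 4" by (simp add: powr_add)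
    also have "4 powr (x / 4) = exp (x / 4 * ln 4)" by (simp add: powr_def)
    also have "\<dots> \<le> exp (x / 2)"
    proof -
      have "x / 4 * ln 4 \<le> x / 4 * 2" using ln4 xpos by (intro mult_left_mono) auto
      then show ?thesis by simp
    qed
    finally show ?thesis using sy by simp
  qed
  have sq5: "5 \<le> sqrt y"
  proof -
    have "sqrt 25 \<le> sqrt y" by (rule real_sqrt_le_mono[OF y25])
    moreover have "sqrt (25::real) = 5" by (rule real_sqrt_unique) auto
    ultimately show ?thesis by linarith
  qed
  have ysq: "y = sqrt y * sqrt y" using ypos by simp
  have "5 * sqrt y \<le> sqrt y * sqrt y" using sq5 ypos by (intro mult_right_mono) auto
  then have y5: "4 * sqrt y + 1 \<le> y" using ysq sq5 by linarith
  have l2: "0 < ln (2::real)" "ln (2::real) < 1" using ln_2_less_1 by auto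
  have "real (4^K) * ln 2 + ln 2 \<le> 4 * sqrt y * ln 2 + ln 2"
    using pow4 l2 by (intro add_right_mono mult_right_mono) auto
  also have "\<dots> \<le> 4 * sqrt y + 1"
  proof -
    have "4 * sqrt y * ln 2 \<le> 4 * sqrt y * 1" using l2 sq5 ypos by (intro mult_left_mono) auto
    then show ?thesis using l2 by linarith
  qed
  finally have e1: "real (4^K) * ln 2 \<le> y - ln 2" using y5 by linarith
  have p2: "(2::real)^(4^K) = exp (real (4^K) * ln 2)"
    by (simp add: powr_realpow[symmetric] powr_def)
  have "exp (real (4^K) * ln 2) \<le> exp (y - ln 2)" using e1 by simp
  also have "exp (y - ln 2) = real T / 2" unfolding y_def using Tpos by (simp add: exp_diff)
  finally have big2: "(2::real)^(4^K) \<le> real T / 2" using p2 by simp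
  have nb: "(32 * K)^(2^K) \<le> (2::nat)^(4^K)" by (rule nat_bound[OF K3])
  have big: "real ((32 * K)^(2^K)) \<le> real T / 2"
  proof -
    have "real ((32 * K)^(2^K)) \<le> real ((2::nat)^(4^K))" using nb by (simp only: of_nat_le_iff)
    then show ?thesis using big2 by simp
  qed
  have "K \<le> (32 * K)^(2^K)"
  proof -
    have "32 * K \<le> (32 * K)^(2^K)" by (rule self_le_power) (use K3 in auto)
    then show ?thesis by simp
  qed
  then have KT: "real K \<le> real T / 2" using big by (simp only: of_nat_le_iff[symmetric])
  have "ln (ln (real T)) / ln (ln (ln (ln (real T)))) = x / ln (ln x)" unfolding x_def y_def by simp
  also have "\<dots> \<le> x / 1" using w1 xpos by (intro divide_left_mono) auto
  finally have "ln (ln (real T)) / ln (ln (ln (ln (real T)))) / 8 \<le> real K / 2" using Klo by simp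
  then show ?thesis using K3 big KT by blast
qed

theorem theorem4p1:
  "\<exists>\<kappa>::real. \<kappa> > 0 \<and> (\<exists>T0::nat. \<forall>T\<ge>T0. \<forall>A::sp_alg.
     \<exists>v::nat \<Rightarrow> real. v 0 \<in> {0..1} \<and> v 1 \<in> {0..1} \<and>
       regret A (\<lambda>_. 0) v 1 2 T \<ge> \<kappa> * (ln (ln (real T)) / ln (ln (ln (ln (real T))))))"
proof -
  have main: "\<forall>T\<ge>nat \<lceil>exp (exp (exp (exp (100::real))))\<rceil>. \<forall>A::sp_alg.
     \<exists>v::nat \<Rightarrow> real. v 0 \<in> {0..1} \<and> v 1 \<in> {0..1} \<and>
       regret A (\<lambda>_. 0) v 1 2 T \<ge> 1/8 * (ln (ln (real T)) / ln (ln (ln (ln (real T)))))"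
  proof (intro allI impI)
  fix T :: nat and A :: sp_alg
  assume "nat \<lceil>exp (exp (exp (exp (100::real))))\<rceil> \<le> T"
  then have T: "exp (exp (exp (exp (100::real)))) \<le> real T"
    using real_nat_ceiling_ge[of "exp (exp (exp (exp (100::real))))"] by (meson of_nat_le_iff order_trans)
  obtain K :: nat where K: "3 \<le> K" "real ((32 * K)^(2^K)) \<le> real T / 2" "real K \<le> real T / 2"
     "ln (ln (real T)) / ln (ln (ln (ln (real T)))) / 8 \<le> real K / 2"
    using asym[OF T] by blast
  obtain ts where ts: "ts \<le> T" "real K / 2 \<le> regret A (\<lambda>_. 0) (vof A (phi K) ts) 1 2 T"
    using exists_ts[OF K(1-3), of A] by blast
  have pos: "\<And>h. 0 < phi K h" using phi_pos K(1) by simp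
  note vp = vof_props[of "phi K" A ts, OF pos]
  show "\<exists>v. v 0 \<in> {0..1} \<and> v 1 \<in> {0..1} \<and>
       1/8 * (ln (ln (real T)) / ln (ln (ln (ln (real T))))) \<le> regret A (\<lambda>_. 0) v 1 2 T"
    using vp ts K(4) bounds[of "phi K" A ts, OF pos]
    by (intro exI[of _ "vof A (phi K) ts"]) auto
  qed
  show ?thesis
    by (rule exI[of _ "1/8"], rule conjI, simp, rule exI[of _ "nat \<lceil>exp (exp (exp (exp (100::real))))\<rceil>"], rule main)
qed

end
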